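(* Let $\mathcal F=(F,\rightarrowtail)$ be an argumentation framework with grounded extension $\mathcal G$. If $A\subseteq F$ is tenable, then $A\cup\mathcal G$ is conflict-free.
   Context: An argumentation framework (AF) $\mathcal F=(F,\rightarrowtail)$ consists of a (possibly infinite) set $F$ of arguments and a binary attack relation $\rightarrowtail\subseteq F\times F$. An argument $a$ attacks a set $B$ if $a\rightarrowtail b$ for some $b\in B$; a set $A$ attacks $x$ if some $a\in A$ attacks $x$. $A^+=\{x\in F:\exists a\in A,\ a\rightarrowtail x\}$. A set is conflict-free if none of its elements attacks one of its elements. For $A,B\subseteq F$, $A$ is as cogent as $B$, written $A\succeq B$, if $A$ is conflict-free and every $b\in B$ that attacks $A$ belongs to $A^+$. We write $B\succ A$ if $B\succeq A$ and not $A\succeq B$. Grounded extension: a set $S$ defends an argument $a$ if every attacker of $a$ is attacked by some element of $S$. Put $\mathcal G_0=\emptyset$, $\mathcal G_{\alpha+1}=\{a\in F: \mathcal G_\alpha \text{ defends } a\}$ for ordinals $\alpha$, and $\mathcal G_\lambda=\bigcup_{\alpha<\lambda}\mathcal G_\alpha$ for limit ordinals $\lambda$. There is an ordinal $\beta$ with $\mathcal G_\gamma=\mathcal G_\beta$ for all $\gamma\ge\beta$; the grounded extension is $\mathcal G=\mathcal G_\beta$. Tenability game: a tenability dispute on $\mathcal F$ is a finite sequence $(X_0,\dots,X_n)$ of subsets of $F$, where even-indexed sets are moves of the Proponent (Pro) and odd-indexed sets are moves of the Opponent (Opp), such that (1) each $X_i$ is conflict-free; (2) $X_i\subseteq X_{i+2}$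 whenever both are defined; (3) $X_1$ and each $X_{i+2}\setminus X_i$ are finite; (4) $X_{i+1}\succeq X_i$ for every $i$; (5) every Opp move satisfies $X_{2k+1}\succ X_{2k}$. Play starts with $X_0=A$ and players alternately extend the sequence so that it remains a tenability dispute. A dispute is concluded if it has no legal extension; a concluded dispute is won by the player who made its last move. A strategy for Pro assigns to each dispute ending with an Opp move a legal Pro reply; it is winning if every concluded dispute starting with $X_0=A$ in which Pro follows it is won by Pro (infinite plays count as wins for Pro). $A$ is tenable if Pro has a winning strategy starting with $X_0=A$. *)

theory Defs
  imports Main
begin

text \<open>An argumentation framework is given by a carrier set F of arguments and an
attack relation att (att a b means a attacks b), with att contained in F x F.\<close>

definition conflict_free :: "('a \<Rightarrow> 'a \<Rightarrow> bool) \<Rightarrow> 'a set \<Rightarrow> bool" where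
  "conflict_free att A \<longleftrightarrow> (\<forall>a\<in>A. \<forall>b\<in>A. \<not> att a b)"

definition attacked_by :: "('a \<Rightarrow> 'a \<Rightarrow> bool) \<Rightarrow> 'a set \<Rightarrow> 'a set" where
  "attacked_by att A = {x. \<exists>a\<in>A. att a x}"

definition cogent :: "('a \<Rightarrow> 'a \<Rightarrow> bool) \<Rightarrow> 'a set \<Rightarrow> 'a set \<Rightarrow> bool" where
  "cogent att A B \<longleftrightarrow> conflict_free att A \<and>
     (\<forall>b\<in>B. (\<exists>a\<in>A. att b a) \<longrightarrow> b \<in> attacked_by att A)"

definition strictly_cogent :: "('a \<Rightarrow> 'a \<Rightarrow> bool) \<Rightarrow> 'a set \<Rightarrow> 'a set \<Rightarrow> bool" where
  "strictly_cogent att B A \<longleftrightarrow> cogent att B A \<and> \<not> cogent att A B"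

definition defends :: "('a \<Rightarrow> 'a \<Rightarrow> bool) \<Rightarrow> 'a set \<Rightarrow> 'a \<Rightarrow> bool" where
  "defends att S a \<longleftrightarrow> (\<forall>b. att b a \<longrightarrow> (\<exists>c\<in>S. att c b))"

text \<open>Grounded extension: union of the transfinite stages G_alpha, i.e. the least set
closed under adding the arguments it defends.\<close>
inductive_set grounded :: "'a set \<Rightarrow> ('a \<Rightarrow> 'a \<Rightarrow> bool) \<Rightarrow> 'a set"
  for F :: "'a set" and att :: "'a \<Rightarrow> 'a \<Rightarrow> bool" where
  "a \<in> F \<Longrightarrow> (\<forall>b. att b a \<longrightarrow> (\<exists>c. c \<in> grounded F att \<and> att c b)) \<Longrightarrow> a \<in> grounded F att"

text \<open>Tenability disputes as lists [X_0, ..., X_n]; even indices are Pro moves.\<close>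
definition dispute :: "'a set \<Rightarrow> ('a \<Rightarrow> 'a \<Rightarrow> bool) \<Rightarrow> 'a set list \<Rightarrow> bool" where
  "dispute F att d \<longleftrightarrow> d \<noteq> [] \<and>
     (\<forall>i<length d. d!i \<subseteq> F \<and> conflict_free att (d!i)) \<and>
     (\<forall>i. i + 2 < length d \<longrightarrow> d!i \<subseteq> d!(i+2)) \<and>
     (1 < length d \<longrightarrow> finite (d!1)) \<and>
     (\<forall>i. i + 2 < length d \<longrightarrow> finite (d!(i+2) - d!i)) \<and>
     (\<forall>i. i + 1 < length d \<longrightarrow> cogent att (d!(i+1)) (d!i)) \<and>
     (\<forall>k. 2*k + 1 < length d \<longrightarrow> strictly_cogent att (d!(2*k+1)) (d!(2*k)))"

definition follows :: "('a set list \<Rightarrow> 'a set) \<Rightarrow> 'a set list \<Rightarrow> bool" where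
  "follows \<sigma> d \<longleftrightarrow> (\<forall>k. 0 < k \<and> 2*k < length d \<longrightarrow> d!(2*k) = \<sigma> (take (2*k) d))"

text \<open>A Pro strategy is winning from A if, in every dispute starting with A that follows it
and ends with an Opp move, its answer is a legal reply. Then every concluded dispute
following it ends with a Pro move (Pro wins), and infinite plays are Pro wins.\<close>
definition tenable :: "'a set \<Rightarrow> ('a \<Rightarrow> 'a \<Rightarrow> bool) \<Rightarrow> 'a set \<Rightarrow> bool" where
  "tenable F att A \<longleftrightarrow> dispute F att [A] \<and>
     (\<exists>\<sigma>. \<forall>d. dispute F att d \<and> hd d = A \<and> follows \<sigma> d \<and> even (length d)
          \<longrightarrow> dispute F att (d @ [\<sigma> d]))"

end

theory Submission
  imports Defs
begin

definition Dset :: "'a set \<Rightarrow> ('a \<Rightarrow> 'a \<Rightarrow> bool) \<Rightarrow> 'a set \<Rightarrow> 'a set" where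
  "Dset F att S = {a\<in>F. \<forall>b. att b a \<longrightarrow> (\<exists>c\<in>S. att c b)}"

inductive_set stage :: "'a set \<Rightarrow> ('a \<Rightarrow> 'a \<Rightarrow> bool) \<Rightarrow> 'a set set" for F att where
  st_D: "S \<in> stage F att \<Longrightarrow> Dset F att S \<in> stage F att"
| st_U: "\<forall>S\<in>C. S \<in> stage F att \<Longrightarrow> \<Union>C \<in> stage F att"

lemma Dset_mono: "S \<subseteq> T \<Longrightarrow> Dset F att S \<subseteq> Dset F att T"
  unfolding Dset_def by blast

lemma stage_infl: "S \<in> stage F att \<Longrightarrow> S \<subseteq> Dset F att S"
proof (induction rule: stage.induct)
  case (st_D S)
  then show ?case using Dset_mono by blast
next
  case (st_U C)
  have "\<forall>S\<in>C. S \<subseteq> Dset F att (\<Union>C)"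
  proof
    fix S assume "S \<in> C"
    then have "S \<subseteq> Dset F att S" using st_U by blast
    also have "\<dots> \<subseteq> Dset F att (\<Union>C)" using \<open>S \<in> C\<close> by (intro Dset_mono) blast
    finally show "S \<subseteq> Dset F att (\<Union>C)" .
  qed
  then show ?case by blast
qed

lemma tower1:
  assumes S: "S \<in> stage F att"
    and ext: "\<forall>T\<in>stage F att. T \<subseteq> S \<longrightarrow> T = S \<or> Dset F att T \<subseteq> S"
  shows "T \<in> stage F att \<Longrightarrow> T \<subseteq> S \<or> Dset F att S \<subseteq> T"
proof (induction rule: stage.induct)
  case (st_D T0)
  from st_D(2) show ?case
  proof (elim disjE)
    assume "T0 \<subseteq> S"
    then have "T0 = S \<or> Dset F att T0 \<subseteq> S" using ext st_D by blast
    then show ?thesis by blast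
  next
    assume "Dset F att S \<subseteq> T0"
    then show ?thesis using stage_infl[OF st_D(1)] by blast
  qed
next
  case (st_U C)
  show ?case
  proof (cases "\<forall>X\<in>C. X \<subseteq> S")
    case True then show ?thesis by blast
  next
    case False
    then obtain X where "X \<in> C" "\<not> X \<subseteq> S" by blast
    then have "Dset F att S \<subseteq> X" using st_U by blast
    then show ?thesis using \<open>X \<in> C\<close> by blast
  qed
qed

lemma tower2: "S \<in> stage F att \<Longrightarrow> \<forall>T\<in>stage F att. T \<subseteq> S \<longrightarrow> T = S \<or> Dset F att T \<subseteq> S"
proof (induction rule: stage.induct)
  case (st_D S0)
  show ?case
  proof (intro ballI impI)
    fix T assume T: "T \<in> stage F att" "T \<subseteq> Dset F att S0"
    have "T \<subseteq> S0 \<or> Dset F att S0 \<subseteq> T" using tower1[OF st_D(1) st_D(2) T(1)] .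
    then show "T = Dset F att S0 \<or> Dset F att T \<subseteq> Dset F att S0"
    proof
      assume "T \<subseteq> S0"
      then have "T = S0 \<or> Dset F att T \<subseteq> S0" using st_D(2) T(1) by blast
      then show ?thesis using stage_infl[OF st_D(1)] by blast
    next
      assume "Dset F att S0 \<subseteq> T" then show ?thesis using T by blast
    qed
  qed
next
  case (st_U C)
  show ?case
  proof (intro ballI impI)
    fix T assume T: "T \<in> stage F att" "T \<subseteq> \<Union>C"
    have one: "\<And>X. X \<in> C \<Longrightarrow> T \<subseteq> X \<or> Dset F att X \<subseteq> T"
      using tower1 st_U T(1) by blast
    show "T = \<Union>C \<or> Dset F att T \<subseteq> \<Union>C"
    proof (cases "\<exists>X\<in>C. T \<subseteq> X \<and> T \<noteq> X")
      case True
      then obtain X where X: "X \<in> C" "T \<subseteq> X" "T \<noteq> X" by blast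
      then have "Dset F att T \<subseteq> X" using st_U T(1) by blast
      then show ?thesis using X by blast
    next
      case False
      show ?thesis
      proof (cases "T \<in> C")
        case True
        have "\<And>X. X \<in> C \<Longrightarrow> X \<subseteq> T \<or> Dset F att T \<subseteq> X"
          using tower1 st_U True by blast
        then show ?thesis using True by blast
      next
        case False2: False
        have "\<And>X. X \<in> C \<Longrightarrow> X \<subseteq> T"
        proof -
          fix X assume "X \<in> C"
          then have "\<not> T \<subseteq> X" using False False2 by blast
          then have "Dset F att X \<subseteq> T" using one \<open>X \<in> C\<close> by blast
          then show "X \<subseteq> T" using stage_infl \<open>X \<in> C\<close> st_U by blast
        qed
        then show ?thesis using T by blast
      qed
    qed
  qed
qed

lemma tower: "S \<in> stage F att \<Longrightarrow> T \<in> stage F att \<Longrightarrow> T \<subseteq> S \<or> Dset F att S \<subseteq> T"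
  using tower1 tower2 by blast

lemma stage_sub_G: "S \<in> stage F att \<Longrightarrow> S \<subseteq> grounded F att"
proof (induction rule: stage.induct)
  case (st_D S)
  then show ?case unfolding Dset_def by (blast intro: grounded.intros)
next
  case (st_U C) then show ?case by blast
qed

lemma G_sub: assumes "Dset F att V \<subseteq> V" shows "grounded F att \<subseteq> V"
proof
  fix x assume "x \<in> grounded F att"
  then show "x \<in> V"
  proof (induction rule: grounded.induct)
    case (1 a)
    then have "a \<in> Dset F att V" unfolding Dset_def by blast
    then show ?case using assms by blast
  qed
qed

definition Vq :: "'a set \<Rightarrow> ('a \<Rightarrow> 'a \<Rightarrow> bool) \<Rightarrow> 'a set \<Rightarrow> 'a set" where
  "Vq F att Q = \<Union>{S\<in>stage F att. S \<inter> Q = {}}"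

lemma Vq_stage: "Vq F att Q \<in> stage F att"
  unfolding Vq_def by (rule st_U) blast

lemma Vq_disj: "Vq F att Q \<inter> Q = {}"
  unfolding Vq_def by blast

lemma key: assumes "Q \<subseteq> grounded F att" "Q \<noteq> {}"
  shows "\<exists>q\<in>Q. q \<in> Dset F att (Vq F att Q)"
proof (rule ccontr)
  assume "\<not> ?thesis"
  then have "Dset F att (Vq F att Q) \<in> {S\<in>stage F att. S \<inter> Q = {}}"
    using st_D[OF Vq_stage] by blast
  then have "Dset F att (Vq F att Q) \<subseteq> Vq F att Q" unfolding Vq_def by blast
  then have "grounded F att \<subseteq> Vq F att Q" by (rule G_sub)
  then show False using assms Vq_disj[of F att Q] by blast
qed

definition Rg :: "'a set \<Rightarrow> ('a \<Rightarrow> 'a \<Rightarrow> bool) \<Rightarrow> ('a \<times> 'a) set" where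
  "Rg F att = {(c,h). \<exists>S\<in>stage F att. c \<in> S \<and> h \<notin> S}"

lemma wf_Rg: "wf (Rg F att)"
proof (rule wfI_min)
  fix x :: 'a and Q assume "x \<in> Q"
  show "\<exists>z\<in>Q. \<forall>y. (y, z) \<in> Rg F att \<longrightarrow> y \<notin> Q"
  proof (cases "Q \<inter> grounded F att = {}")
    case True
    have "\<forall>y. (y, x) \<in> Rg F att \<longrightarrow> y \<notin> Q"
      using True stage_sub_G unfolding Rg_def by blast
    then show ?thesis using \<open>x \<in> Q\<close> by blast
  next
    case False
    let ?Q = "Q \<inter> grounded F att"
    obtain q where q: "q \<in> ?Q" "q \<in> Dset F att (Vq F att ?Q)" using key[of ?Q] False by blast
    have "\<forall>y. (y, q) \<in> Rg F att \<longrightarrow> y \<notin> Q"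
    proof (intro allI impI)
      fix y assume "(y, q) \<in> Rg F att"
      then obtain S where S: "S \<in> stage F att" "y \<in> S" "q \<notin> S" unfolding Rg_def by blast
      have "S \<subseteq> Vq F att ?Q \<or> Dset F att (Vq F att ?Q) \<subseteq> S" using tower[OF Vq_stage S(1)] .
      then have "y \<in> Vq F att ?Q" using S q by blast
      moreover have "y \<in> grounded F att" using S stage_sub_G by blast
      ultimately show "y \<notin> Q" using Vq_disj[of F att ?Q] by blast
    qed
    then show ?thesis using q by blast
  qed
qed

lemma Rg_def_prop: assumes "h \<in> grounded F att" "att b h"
  shows "\<exists>c\<in>grounded F att. (c, h) \<in> Rg F att \<and> att c b"
proof -
  have "\<exists>q\<in>{h}. q \<in> Dset F att (Vq F att {h})" using key[of "{h}" F att] assms(1) by simp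
  then have "h \<in> Dset F att (Vq F att {h})" by simp
  then have "\<exists>c\<in>Vq F att {h}. att c b" using assms(2) unfolding Dset_def by simp
  then obtain c where c: "c \<in> Vq F att {h}" "att c b" by blast
  then obtain S where S: "S \<in> stage F att" "c \<in> S" "h \<notin> S" unfolding Vq_def by blast
  have "(c, h) \<in> Rg F att" unfolding Rg_def using S by blast
  moreover have "c \<in> grounded F att" using S stage_sub_G by blast
  ultimately show ?thesis using c by blast
qed

lemma G_cf_aux: "\<forall>g. g \<in> grounded F att \<longrightarrow> (\<forall>h\<in>grounded F att. \<not> att g h)"
proof
  fix g
  show "g \<in> grounded F att \<longrightarrow> (\<forall>h\<in>grounded F att. \<not> att g h)"
  proof (induction g rule: wf_induct[OF wf_Rg[of F att]])
    case (1 g)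
    show ?case
    proof (intro impI ballI notI)
      fix h assume g: "g \<in> grounded F att" and h: "h \<in> grounded F att" "att g h"
      obtain c1 where c1: "c1 \<in> grounded F att" "att c1 g"
        using Rg_def_prop[OF h(1) h(2)] by blast
      obtain c2 where c2: "c2 \<in> grounded F att" "(c2, g) \<in> Rg F att" "att c2 c1"
        using Rg_def_prop[OF g c1(2)] by blast
      have "c2 \<in> grounded F att \<longrightarrow> (\<forall>h\<in>grounded F att. \<not> att c2 h)"
        using 1 c2(2) by blast
      then have "\<not> att c2 c1" using c1(1) c2(1) by (rule_tac bspec) (erule mp)
      then show False using c2(3) by (rule notE)
    qed
  qed
qed

lemma G_cf: "conflict_free att (grounded F att)"
  unfolding conflict_free_def
proof (intro ballI)
  fix a b assume ab: "a \<in> grounded F att" "b \<in> grounded F att"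
  have "a \<in> grounded F att \<longrightarrow> (\<forall>h\<in>grounded F att. \<not> att a h)" using G_cf_aux by (rule spec)
  then show "\<not> att a b" using ab by blast
qed


definition Rt :: "'a set \<Rightarrow> ('a \<Rightarrow> 'a \<Rightarrow> bool) \<Rightarrow> ('a \<times> 'a) set" where
  "Rt F att = (Rg F att)\<^sup>+"

lemma wf_Rt: "wf (Rt F att)"
  unfolding Rt_def using wf_Rg by (rule wf_trancl)

lemma Rt_trans: "(x, y) \<in> Rt F att \<Longrightarrow> (y, z) \<in> Rt F att \<Longrightarrow> (x, z) \<in> Rt F att"
  unfolding Rt_def by (rule trancl_trans)

lemma Rt_prop: assumes "h \<in> grounded F att" "att b h"
  shows "\<exists>c. c \<in> grounded F att \<and> (c, h) \<in> Rt F att \<and> att c b"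
proof -
  obtain c where "c \<in> grounded F att" "(c, h) \<in> Rg F att" "att c b"
    using Rg_def_prop[OF assms] by blast
  then show ?thesis unfolding Rt_def by blast
qed

definition dfn :: "'a set \<Rightarrow> ('a \<Rightarrow> 'a \<Rightarrow> bool) \<Rightarrow> 'a \<Rightarrow> 'a \<Rightarrow> 'a" where
  "dfn F att z b = (SOME c. c \<in> grounded F att \<and> (c, z) \<in> Rt F att \<and> att c b)"

lemma dfn_prop: assumes "z \<in> grounded F att" "att b z"
  shows "dfn F att z b \<in> grounded F att \<and> (dfn F att z b, z) \<in> Rt F att \<and> att (dfn F att z b) b"
  unfolding dfn_def using Rt_prop[OF assms] by (rule someI_ex)

inductive_set Cl :: "'a set \<Rightarrow> ('a \<Rightarrow> 'a \<Rightarrow> bool) \<Rightarrow> 'a set \<Rightarrow> 'a set \<Rightarrow> 'a set"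
  for F att B Y where
  cl_base: "y \<in> Y \<Longrightarrow> y \<in> Cl F att B Y"
| cl_step: "z \<in> Cl F att B Y \<Longrightarrow> b \<in> B \<Longrightarrow> att b z \<Longrightarrow> z \<in> grounded F att \<Longrightarrow> dfn F att z b \<in> Cl F att B Y"

definition low :: "'a set \<Rightarrow> ('a \<Rightarrow> 'a \<Rightarrow> bool) \<Rightarrow> 'a \<Rightarrow> 'a set" where
  "low F att g0 = {z. z \<in> grounded F att \<and> (z = g0 \<or> (z, g0) \<in> Rt F att)}"

lemma low_down: assumes "z \<in> low F att g0" "(c, z) \<in> Rt F att" "c \<in> grounded F att"
  shows "c \<in> low F att g0"
  using assms Rt_trans[of c z F att g0] unfolding low_def by blast

lemma Cl_low: assumes "Y \<subseteq> low F att g0" shows "x \<in> Cl F att B Y \<Longrightarrow> x \<in> low F att g0"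
proof (induction rule: Cl.induct)
  case (cl_base y) then show ?case using assms by blast
next
  case (cl_step z b)
  have h: "z \<in> grounded F att" "att b z" "z \<in> low F att g0" using cl_step by blast+
  have d: "dfn F att z b \<in> grounded F att" "(dfn F att z b, z) \<in> Rt F att"
    using dfn_prop[OF h(1) h(2)] by auto
  show ?case by (rule low_down[OF h(3) d(2) d(1)])
qed

lemma Cl_sub: "Y \<subseteq> Cl F att B Y"
proof
  fix y assume "y \<in> Y" then show "y \<in> Cl F att B Y" by (rule cl_base)
qed

lemma Cl_single: "x \<in> Cl F att B {y} \<Longrightarrow> x = y \<or> (\<exists>b\<in>B. att b y \<and> y \<in> grounded F att \<and> x \<in> Cl F att B {dfn F att y b})"
proof (induction rule: Cl.induct)
  case (cl_base y') then show ?case by simp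
next
  case (cl_step z b)
  have h: "z \<in> grounded F att" "att b z" "b \<in> B" using cl_step by blast+
  have ih: "z = y \<or> (\<exists>b\<in>B. att b y \<and> y \<in> grounded F att \<and> z \<in> Cl F att B {dfn F att y b})"
    using cl_step by blast
  from ih show ?case
  proof (elim disjE)
    assume "z = y"
    then show ?thesis using h Cl.cl_base[of "dfn F att y b" "{dfn F att y b}" F att B] by blast
  next
    assume "\<exists>b'\<in>B. att b' y \<and> y \<in> grounded F att \<and> z \<in> Cl F att B {dfn F att y b'}"
    then obtain b' where b': "b' \<in> B" "att b' y" "y \<in> grounded F att" "z \<in> Cl F att B {dfn F att y b'}" by blast
    have "dfn F att z b \<in> Cl F att B {dfn F att y b'}"
      using Cl.cl_step[OF b'(4) h(3) h(2) h(1)] .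
    then show ?thesis using b' by blast
  qed
qed

lemma finite_Cl1: assumes "finite B" shows "finite (Cl F att B {y})"
proof (induction y rule: wf_induct[OF wf_Rt[of F att]])
  case (1 y)
  have sub: "Cl F att B {y} \<subseteq> {y} \<union> (\<Union>b\<in>{b\<in>B. att b y \<and> y \<in> grounded F att}. Cl F att B {dfn F att y b})"
  proof
    fix x assume "x \<in> Cl F att B {y}"
    from Cl_single[OF this]
    show "x \<in> {y} \<union> (\<Union>b\<in>{b\<in>B. att b y \<and> y \<in> grounded F att}. Cl F att B {dfn F att y b})"
      by blast
  qed
  have "\<forall>b\<in>{b\<in>B. att b y \<and> y \<in> grounded F att}. finite (Cl F att B {dfn F att y b})"
  proof
    fix b assume "b \<in> {b\<in>B. att b y \<and> y \<in> grounded F att}"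
    then have "y \<in> grounded F att" "att b y" by simp_all
    then have "(dfn F att y b, y) \<in> Rt F att" using dfn_prop[of y F att b] by simp
    then show "finite (Cl F att B {dfn F att y b})" using 1 by simp
  qed
  then have "finite ({y} \<union> (\<Union>b\<in>{b\<in>B. att b y \<and> y \<in> grounded F att}. Cl F att B {dfn F att y b}))"
    using assms by auto
  then show ?case using sub by (rule finite_subset[rotated])
qed

lemma Cl_Un: "x \<in> Cl F att B Y \<Longrightarrow> \<exists>y\<in>Y. x \<in> Cl F att B {y}"
proof (induction rule: Cl.induct)
  case (cl_base y) then show ?case using Cl.cl_base[of y "{y}"] by blast
next
  case (cl_step z b)
  have h: "z \<in> grounded F att" "att b z" "b \<in> B" using cl_step by blast+
  obtain y where "y \<in> Y" "z \<in> Cl F att B {y}" using cl_step by blast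
  then show ?case using Cl.cl_step[of z F att B "{y}" b] h by blast
qed

lemma finite_Cl: assumes "finite B" "finite Y" shows "finite (Cl F att B Y)"
proof -
  have "Cl F att B Y \<subseteq> (\<Union>y\<in>Y. Cl F att B {y})"
  proof
    fix x assume "x \<in> Cl F att B Y"
    from Cl_Un[OF this] show "x \<in> (\<Union>y\<in>Y. Cl F att B {y})" by blast
  qed
  moreover have "finite (\<Union>y\<in>Y. Cl F att B {y})" using assms finite_Cl1[OF assms(1)] by simp
  ultimately show ?thesis by (rule finite_subset)
qed


lemma G_sub_F: "grounded F att \<subseteq> F"
proof
  fix x assume "x \<in> grounded F att" then show "x \<in> F" by (cases rule: grounded.cases) simp
qed

lemma dispute_snoc:
  assumes d: "dispute F att d" and n: "n = length d" and ZF: "Z \<subseteq> F" and Zcf: "conflict_free att Z"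
    and mono: "2 \<le> n \<Longrightarrow> d!(n-2) \<subseteq> Z" and fin: "2 \<le> n \<Longrightarrow> finite (Z - d!(n-2))"
    and fin1: "n = 1 \<Longrightarrow> finite Z"
    and cog: "cogent att Z (d!(n-1))"
    and str: "odd n \<Longrightarrow> strictly_cogent att Z (d!(n-1))"
  shows "dispute F att (d @ [Z])"
proof -
  have D1: "d \<noteq> []" and D2: "\<forall>i<n. d!i \<subseteq> F \<and> conflict_free att (d!i)"
    and D3: "\<forall>i. i + 2 < n \<longrightarrow> d!i \<subseteq> d!(i+2)"
    and D4: "1 < n \<longrightarrow> finite (d!1)"
    and D5: "\<forall>i. i + 2 < n \<longrightarrow> finite (d!(i+2) - d!i)"
    and D6: "\<forall>i. i + 1 < n \<longrightarrow> cogent att (d!(i+1)) (d!i)"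
    and D7: "\<forall>k. 2*k + 1 < n \<longrightarrow> strictly_cogent att (d!(2*k+1)) (d!(2*k))"
    using d n unfolding dispute_def by auto
  have n1: "1 \<le> n" using D1 n by (cases d) auto
  have L: "length (d @ [Z]) = Suc n" using n by simp
  have A1: "\<And>i. i < n \<Longrightarrow> (d @ [Z])!i = d!i" using n by (simp add: nth_append)
  have A2: "(d @ [Z])!n = Z" using n by simp
  have P2: "\<forall>i<length (d @ [Z]). (d @ [Z])!i \<subseteq> F \<and> conflict_free att ((d @ [Z])!i)"
  proof (intro allI impI)
    fix i assume "i < length (d @ [Z])"
    then have "i < n \<or> i = n" using L by linarith
    then show "(d @ [Z])!i \<subseteq> F \<and> conflict_free att ((d @ [Z])!i)"
    proof
      assume "i < n" then show ?thesis using A1 D2 by simp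
    next
      assume "i = n" then show ?thesis using A2 ZF Zcf by simp
    qed
  qed
  have P3: "\<forall>i. i + 2 < length (d @ [Z]) \<longrightarrow> (d @ [Z])!i \<subseteq> (d @ [Z])!(i+2)"
  proof (intro allI impI)
    fix i assume "i + 2 < length (d @ [Z])"
    then have "i + 2 < n \<or> i + 2 = n" using L by linarith
    then show "(d @ [Z])!i \<subseteq> (d @ [Z])!(i+2)"
    proof
      assume "i + 2 < n" then show ?thesis using A1 D3 by simp
    next
      assume h: "i + 2 = n"
      then have "i = n - 2" "2 \<le> n" by simp_all
      then show ?thesis using A1[of i] A2 mono h by simp
    qed
  qed
  have P4: "1 < length (d @ [Z]) \<longrightarrow> finite ((d @ [Z])!1)"
  proof
    assume "1 < length (d @ [Z])"
    have "1 < n \<or> n = 1" using n1 by linarith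
    then show "finite ((d @ [Z])!1)"
    proof
      assume "1 < n" then show ?thesis using A1[of 1] D4 by simp
    next
      assume "n = 1" then show ?thesis using A2 fin1 by simp
    qed
  qed
  have P5: "\<forall>i. i + 2 < length (d @ [Z]) \<longrightarrow> finite ((d @ [Z])!(i+2) - (d @ [Z])!i)"
  proof (intro allI impI)
    fix i assume "i + 2 < length (d @ [Z])"
    then have "i + 2 < n \<or> i + 2 = n" using L by linarith
    then show "finite ((d @ [Z])!(i+2) - (d @ [Z])!i)"
    proof
      assume "i + 2 < n" then show ?thesis using A1[of i] A1[of "i+2"] D5 by simp
    next
      assume h: "i + 2 = n"
      then have "i = n - 2" "2 \<le> n" by simp_all
      then show ?thesis using A1[of i] A2 fin h by simp
    qed
  qed
  have P6: "\<forall>i. i + 1 < length (d @ [Z]) \<longrightarrow> cogent att ((d @ [Z])!(i+1)) ((d @ [Z])!i)"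
  proof (intro allI impI)
    fix i assume "i + 1 < length (d @ [Z])"
    then have "i + 1 < n \<or> i + 1 = n" using L by linarith
    then show "cogent att ((d @ [Z])!(i+1)) ((d @ [Z])!i)"
    proof
      assume "i + 1 < n" then show ?thesis using A1[of i] A1[of "i+1"] D6 by simp
    next
      assume h: "i + 1 = n"
      then have "i = n - 1" by simp
      then show ?thesis using A1[of i] A2 cog h by simp
    qed
  qed
  have P7: "\<forall>k. 2*k + 1 < length (d @ [Z]) \<longrightarrow> strictly_cogent att ((d @ [Z])!(2*k+1)) ((d @ [Z])!(2*k))"
  proof (intro allI impI)
    fix k assume "2*k + 1 < length (d @ [Z])"
    then have "2*k + 1 < n \<or> 2*k + 1 = n" using L by linarith
    then show "strictly_cogent att ((d @ [Z])!(2*k+1)) ((d @ [Z])!(2*k))"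
    proof
      assume "2*k + 1 < n" then show ?thesis using A1[of "2*k"] A1[of "2*k+1"] D7 by simp
    next
      assume h: "2*k + 1 = n"
      have "2*k = n - 1" using h by simp
      have "odd n" using h by presburger
      then show ?thesis using A1[of "2*k"] A2 str h \<open>2*k = n - 1\<close> by simp
    qed
  qed
  show ?thesis unfolding dispute_def using P2 P3 P4 P5 P6 P7 by simp
qed

lemma follows_snoc_odd:
  assumes "follows \<sigma> d" "odd (length d)" shows "follows \<sigma> (d @ [Z])"
  unfolding follows_def
proof (intro allI impI)
  fix k assume k: "0 < k \<and> 2*k < length (d @ [Z])"
  then have "2*k < length d" using assms(2) by (simp add: less_Suc_eq) presburger
  then have "d!(2*k) = \<sigma> (take (2*k) d)" using assms(1) k unfolding follows_def by simp
  then show "(d @ [Z])!(2*k) = \<sigma> (take (2*k) (d @ [Z]))"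
    using \<open>2*k < length d\<close> by (simp add: nth_append)
qed

lemma follows_snoc_sigma:
  assumes "follows \<sigma> d" shows "follows \<sigma> (d @ [\<sigma> d])"
  unfolding follows_def
proof (intro allI impI)
  fix k assume k: "0 < k \<and> 2*k < length (d @ [\<sigma> d])"
  then have "2*k < length d \<or> 2*k = length d" by (simp add: less_Suc_eq)
  then show "(d @ [\<sigma> d])!(2*k) = \<sigma> (take (2*k) (d @ [\<sigma> d]))"
  proof
    assume h: "2*k < length d"
    then have "d!(2*k) = \<sigma> (take (2*k) d)" using assms(1) k unfolding follows_def by simp
    then show ?thesis using h by (simp add: nth_append)
  next
    assume h: "2*k = length d"
    then show ?thesis by simp
  qed
qed


definition good :: "'a set \<Rightarrow> ('a \<Rightarrow> 'a \<Rightarrow> bool) \<Rightarrow> 'a set \<Rightarrow> ('a set list \<Rightarrow> 'a set) \<Rightarrow> 'a \<Rightarrow> 'a set list \<Rightarrow> bool" where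
  "good F att A \<sigma> g0 d \<longleftrightarrow> dispute F att d \<and> hd d = A \<and> follows \<sigma> d \<and> odd (length d) \<and>
     3 \<le> length d \<and> d!(length d - 2) \<subseteq> low F att g0 \<and> finite (d!(length d - 2)) \<and>
     finite (last d - A)"

lemma low_G: "z \<in> low F att g0 \<Longrightarrow> z \<in> grounded F att"
  unfolding low_def by simp

lemma claim:
  assumes win: "\<forall>d. dispute F att d \<and> hd d = A \<and> follows \<sigma> d \<and> even (length d) \<longrightarrow> dispute F att (d @ [\<sigma> d])"
    and noatt: "\<forall>z\<in>low F att g0. \<forall>a\<in>A. \<not> att a z"
  shows "\<forall>d. l \<in> low F att g0 \<longrightarrow> good F att A \<sigma> g0 d \<longrightarrow> l \<in> d!(length d - 2) \<longrightarrow> (\<exists>x\<in>last d. att l x) \<longrightarrow> False"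
proof (induction l rule: wf_induct[OF wf_Rt[of F att]])
  case (1 l)
  show ?case
  proof (intro allI impI)
    fix d assume lL: "l \<in> low F att g0" and gd: "good F att A \<sigma> g0 d"
      and lY: "l \<in> d!(length d - 2)" and lX: "\<exists>x\<in>last d. att l x"
    define n where "n = length d"
    define Y where "Y = d!(n - 2)"
    define X where "X = d!(n - 1)"
    have disp: "dispute F att d" and hdA: "hd d = A" and fol: "follows \<sigma> d" and oddn: "odd n"
      and n3: "3 \<le> n" and YL: "Y \<subseteq> low F att g0" and Yfin: "finite Y" and XAfin0: "finite (last d - A)"
      using gd unfolding good_def n_def Y_def by auto
    have dne: "d \<noteq> []" using n3 n_def by auto
    have lastX: "last d = X" unfolding X_def n_def using dne by (simp add: last_conv_nth)
    have XAfin: "finite (X - A)" using XAfin0 lastX by simp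
    have lY': "l \<in> Y" using lY unfolding Y_def n_def .
    have lX': "\<exists>x\<in>X. att l x" using lX lastX by simp
    have cogXY: "cogent att X Y"
    proof -
      have "\<forall>i. i + 1 < n \<longrightarrow> cogent att (d!(i+1)) (d!i)" using disp n_def unfolding dispute_def by simp
      then have "cogent att (d!(n - 2 + 1)) (d!(n - 2))" using n3 by simp
      moreover have "n - 2 + 1 = n - 1" using n3 by simp
      ultimately show ?thesis unfolding X_def Y_def by simp
    qed
    then have "l \<in> attacked_by att X" using lY' lX' unfolding cogent_def by blast
    then obtain b where bX: "b \<in> X" and bl: "att b l" unfolding attacked_by_def by blast
    have lG: "l \<in> grounded F att" using lL by (rule low_G)
    define B where "B = X - A"
    have Bfin: "finite B" using XAfin B_def by simp
    have bB: "b \<in> B" using noatt lL bl bX unfolding B_def by blast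
    define Z where "Z = Cl F att B Y"
    have ZL: "Z \<subseteq> low F att g0" unfolding Z_def using Cl_low[OF YL] by blast
    have Zfin: "finite Z" unfolding Z_def using finite_Cl[OF Bfin Yfin] .
    have YZ: "Y \<subseteq> Z" unfolding Z_def by (rule Cl_sub)
    have ZG: "Z \<subseteq> grounded F att" using ZL unfolding low_def by blast
    have ZF: "Z \<subseteq> F" using ZG G_sub_F[of F att] by (rule subset_trans)
    have Zcf: "conflict_free att Z" using ZG G_cf[of att F] unfolding conflict_free_def by blast
    have lZ: "l \<in> Z" using lY' YZ by blast
    have stepZ: "\<And>z x. z \<in> Z \<Longrightarrow> x \<in> X \<Longrightarrow> att x z \<Longrightarrow>
        dfn F att z x \<in> Z \<and> (dfn F att z x, z) \<in> Rt F att \<and> att (dfn F att z x) x"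
    proof -
      fix z x assume z: "z \<in> Z" and x: "x \<in> X" and xz: "att x z"
      have zL: "z \<in> low F att g0" using z ZL by blast
      have zG: "z \<in> grounded F att" using zL by (rule low_G)
      have xB: "x \<in> B" using noatt zL xz x unfolding B_def by blast
      have "dfn F att z x \<in> Z" unfolding Z_def
        using Cl.cl_step[of z F att B Y x] z xB xz zG unfolding Z_def by blast
      then show "dfn F att z x \<in> Z \<and> (dfn F att z x, z) \<in> Rt F att \<and> att (dfn F att z x) x"
        using dfn_prop[OF zG xz] by simp
    qed
    define Q where "Q = {z \<in> Z. (z, l) \<in> Rt F att \<and> (\<exists>x\<in>X. att z x)}"
    have c1Q: "dfn F att l b \<in> Q" using stepZ[OF lZ bX bl] bX unfolding Q_def by blast
    obtain m where mQ: "m \<in> Q" and mmin: "\<And>y. (y, m) \<in> Rt F att \<Longrightarrow> y \<notin> Q"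
      using wfE_min[OF wf_Rt c1Q] by blast
    have mZ: "m \<in> Z" and ml: "(m, l) \<in> Rt F att" and mX: "\<exists>x\<in>X. att m x" using mQ unfolding Q_def by auto
    have nm: "\<not> (\<exists>x\<in>X. att x m)"
    proof
      assume "\<exists>x\<in>X. att x m"
      then obtain x where x: "x \<in> X" "att x m" by blast
      have s: "dfn F att m x \<in> Z" "(dfn F att m x, m) \<in> Rt F att" "att (dfn F att m x) x"
        using stepZ[OF mZ x(1) x(2)] by simp_all
      have "(dfn F att m x, l) \<in> Rt F att" using Rt_trans[OF s(2) ml] .
      then have "dfn F att m x \<in> Q" using s x unfolding Q_def by blast
      then show False using mmin[OF s(2)] by simp
    qed
    have cogZX: "cogent att Z X"
      unfolding cogent_def
    proof (intro conjI ballI impI)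
      show "conflict_free att Z" by (rule Zcf)
    next
      fix x assume x: "x \<in> X" and "\<exists>z\<in>Z. att x z"
      then obtain z where z: "z \<in> Z" "att x z" by blast
      have "dfn F att z x \<in> Z \<and> att (dfn F att z x) x" using stepZ[OF z(1) x z(2)] by simp
      then show "x \<in> attacked_by att Z" unfolding attacked_by_def by blast
    qed
    have ncogXZ: "\<not> cogent att X Z"
    proof
      assume "cogent att X Z"
      then have "m \<in> attacked_by att X" using mZ mX unfolding cogent_def by blast
      then show False using nm unfolding attacked_by_def by blast
    qed
    define d1 where "d1 = d @ [Z]"
    have disp1: "dispute F att d1" unfolding d1_def
    proof (rule dispute_snoc[OF disp n_def ZF Zcf])
      show "d!(n-2) \<subseteq> Z" using YZ Y_def by simp
      show "finite (Z - d!(n-2))" using Zfin by simp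
      show "n = 1 \<Longrightarrow> finite Z" using Zfin by simp
      show "cogent att Z (d!(n-1))" using cogZX X_def by simp
      show "strictly_cogent att Z (d!(n-1))" using cogZX ncogXZ X_def unfolding strictly_cogent_def by simp
    qed
    have hd1: "hd d1 = A" using hdA dne unfolding d1_def by simp
    have fol1: "follows \<sigma> d1" unfolding d1_def using follows_snoc_odd[OF fol] oddn n_def by simp
    have ev1: "even (length d1)" unfolding d1_def using oddn n_def by simp
    define d2 where "d2 = d1 @ [\<sigma> d1]"
    have disp2: "dispute F att d2" unfolding d2_def using win disp1 hd1 fol1 ev1 by blast
    have len2: "length d2 = n + 2" unfolding d2_def d1_def n_def by simp
    have d2n: "d2!n = Z" unfolding d2_def d1_def n_def by (simp add: nth_append)
    have lt: "n - 1 < length d" using n3 n_def by simp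
    have "d2!(n-1) = d!(n-1)" unfolding d2_def d1_def using lt by (simp add: nth_append)
    then have d2n1: "d2!(n-1) = X" unfolding X_def .
    have d2last: "last d2 = d2!(n+1)" unfolding d2_def d1_def n_def by (simp add: nth_append)
    have mono2: "d2!(n-1) \<subseteq> d2!(n+1)"
    proof -
      have "\<forall>i. i + 2 < length d2 \<longrightarrow> d2!i \<subseteq> d2!(i+2)" using disp2 unfolding dispute_def by simp
      then have "d2!(n-1) \<subseteq> d2!(n-1+2)" by (rule allE[where x="n-1"], elim impE) (use len2 n3 in simp_all)
      moreover have "n - 1 + 2 = n + 1" using n3 by simp
      ultimately show ?thesis by simp
    qed
    have fin2: "finite (d2!(n+1) - d2!(n-1))"
    proof -
      have "\<forall>i. i + 2 < length d2 \<longrightarrow> finite (d2!(i+2) - d2!i)" using disp2 unfolding dispute_def by simp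
      then have "finite (d2!(n-1+2) - d2!(n-1))" by (rule allE[where x="n-1"], elim impE) (use len2 n3 in simp_all)
      moreover have "n - 1 + 2 = n + 1" using n3 by simp
      ultimately show ?thesis by simp
    qed
    have good2: "good F att A \<sigma> g0 d2"
      unfolding good_def
    proof (intro conjI)
      show "dispute F att d2" by (rule disp2)
      show "hd d2 = A" using hdA dne unfolding d2_def d1_def by (simp add: hd_append2)
      show "follows \<sigma> d2" unfolding d2_def by (rule follows_snoc_sigma[OF fol1])
      show "odd (length d2)" using len2 oddn by simp
      show "3 \<le> length d2" using len2 n3 by simp
      show "d2!(length d2 - 2) \<subseteq> low F att g0" using len2 d2n ZL by simp
      show "finite (d2!(length d2 - 2))" using len2 d2n Zfin by simp
      have "last d2 - A \<subseteq> (d2!(n+1) - d2!(n-1)) \<union> (X - A)" using d2last d2n1 by blast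
      moreover have "finite ((d2!(n+1) - d2!(n-1)) \<union> (X - A))" using fin2 XAfin by simp
      ultimately show "finite (last d2 - A)" by (rule finite_subset)
    qed
    have mY2: "m \<in> d2!(length d2 - 2)" using len2 d2n mZ by simp
    have mX2: "\<exists>x\<in>last d2. att m x" using mX mono2 d2n1 d2last by blast
    have mL: "m \<in> low F att g0" using mZ ZL by blast
    have IH: "\<forall>d. m \<in> low F att g0 \<longrightarrow> good F att A \<sigma> g0 d \<longrightarrow> m \<in> d!(length d - 2) \<longrightarrow> (\<exists>x\<in>last d. att m x) \<longrightarrow> False"
      using 1 ml by blast
    show False using IH mL good2 mY2 mX2 by blast
  qed
qed


theorem mainTheorem4:
  fixes F :: "'a set" and att :: "'a \<Rightarrow> 'a \<Rightarrow> bool" and A :: "'a set"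
  assumes "\<forall>x y. att x y \<longrightarrow> x \<in> F \<and> y \<in> F"
    and "A \<subseteq> F"
    and "tenable F att A"
  shows "conflict_free att (A \<union> grounded F att)"
proof -
  have d0: "dispute F att [A]" using assms(3) unfolding tenable_def by simp
  obtain \<sigma> where win: "\<forall>d. dispute F att d \<and> hd d = A \<and> follows \<sigma> d \<and> even (length d) \<longrightarrow> dispute F att (d @ [\<sigma> d])"
    using assms(3) unfolding tenable_def by blast
  have Acf: "conflict_free att A" using d0 unfolding dispute_def by simp
  have NoG: "\<forall>g\<in>grounded F att. \<forall>a\<in>A. \<not> att g a"
  proof (rule ccontr)
    assume "\<not> ?thesis"
    then obtain g a where ga: "g \<in> grounded F att" "a \<in> A" "att g a" by blast
    define S where "S = {g \<in> grounded F att. \<exists>a\<in>A. att g a}"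
    have gS: "g \<in> S" using ga unfolding S_def by blast
    obtain g0 where g0S: "g0 \<in> S" and g0min: "\<And>y. (y, g0) \<in> Rt F att \<Longrightarrow> y \<notin> S"
      using wfE_min[OF wf_Rt[of F att] gS] by blast
    have g0G: "g0 \<in> grounded F att" using g0S unfolding S_def by simp
    obtain a0 where a0: "a0 \<in> A" "att g0 a0" using g0S unfolding S_def by blast
    have g0L: "g0 \<in> low F att g0" using g0G unfolding low_def by simp
    have noatt: "\<forall>z\<in>low F att g0. \<forall>a\<in>A. \<not> att a z"
    proof (intro ballI notI)
      fix z a assume zL: "z \<in> low F att g0" and aA: "a \<in> A" and az: "att a z"
      have zG: "z \<in> grounded F att" using zL by (rule low_G)
      obtain c where c: "c \<in> grounded F att" "(c, z) \<in> Rt F att" "att c a" using Rt_prop[OF zG az] by blast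
      have "z = g0 \<or> (z, g0) \<in> Rt F att" using zL unfolding low_def by simp
      then have "(c, g0) \<in> Rt F att" using c(2) Rt_trans[of c z F att g0] by blast
      moreover have "c \<in> S" using c aA unfolding S_def by blast
      ultimately show False using g0min by blast
    qed
    define d1 where "d1 = [A, {g0}]"
    have cf0: "conflict_free att {g0}" using G_cf[of att F] g0G unfolding conflict_free_def by blast
    have F0: "{g0} \<subseteq> F" using G_sub_F[of F att] g0G by blast
    have cog: "cogent att {g0} A"
      unfolding cogent_def using cf0 noatt g0L by blast
    have ncog: "\<not> cogent att A {g0}"
    proof
      assume "cogent att A {g0}"
      then have "g0 \<in> attacked_by att A" using a0 unfolding cogent_def by blast
      then show False using noatt g0L unfolding attacked_by_def by blast
    qed
    have disp1: "dispute F att d1"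
    proof -
      have "dispute F att ([A] @ [{g0}])"
        by (rule dispute_snoc[OF d0 refl F0 cf0]) (use cog ncog in \<open>simp_all add: strictly_cogent_def\<close>)
      then show ?thesis unfolding d1_def by simp
    qed
    have fol0: "follows \<sigma> [A]" unfolding follows_def by simp
    have fol1: "follows \<sigma> d1" unfolding d1_def using follows_snoc_odd[OF fol0, of "{g0}"] by simp
    define d2 where "d2 = d1 @ [\<sigma> d1]"
    have "hd d1 = A" "even (length d1)" unfolding d1_def by simp_all
    then have disp2: "dispute F att d2" unfolding d2_def using win disp1 fol1 by blast
    have len2: "length d2 = 3" unfolding d2_def d1_def by simp
    have good2: "good F att A \<sigma> g0 d2"
      unfolding good_def
    proof (intro conjI)
      show "dispute F att d2" by (rule disp2)
      show "hd d2 = A" unfolding d2_def d1_def by simp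
      show "follows \<sigma> d2" unfolding d2_def by (rule follows_snoc_sigma[OF fol1])
      show "odd (length d2)" using len2 by simp
      show "3 \<le> length d2" using len2 by simp
      show "d2!(length d2 - 2) \<subseteq> low F att g0" using len2 g0L unfolding d2_def d1_def by simp
      show "finite (d2!(length d2 - 2))" using len2 unfolding d2_def d1_def by simp
      have "\<forall>i. i + 2 < length d2 \<longrightarrow> finite (d2!(i+2) - d2!i)" using disp2 unfolding dispute_def by simp
      then have "finite (d2!(0+2) - d2!0)" by (rule allE[where x=0], elim impE) (use len2 in simp_all)
      then have "finite (d2!2 - d2!0)" by (simp add: numeral_2_eq_2)
      then show "finite (last d2 - A)" unfolding d2_def d1_def by simp
    qed
    have mono: "d2!0 \<subseteq> d2!2"
    proof -
      have "\<forall>i. i + 2 < length d2 \<longrightarrow> d2!i \<subseteq> d2!(i+2)" using disp2 unfolding dispute_def by simp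
      then have "d2!0 \<subseteq> d2!(0+2)" by (rule allE[where x=0], elim impE) (use len2 in simp_all)
      then show ?thesis by (simp add: numeral_2_eq_2)
    qed
    have Y: "g0 \<in> d2!(length d2 - 2)" using len2 unfolding d2_def d1_def by simp
    have X: "\<exists>x\<in>last d2. att g0 x"
    proof -
      have "a0 \<in> d2!2" using mono a0(1) unfolding d2_def d1_def by auto
      moreover have "last d2 = d2!2" unfolding d2_def d1_def by simp
      ultimately show ?thesis using a0(2) by blast
    qed
    have "\<forall>d. g0 \<in> low F att g0 \<longrightarrow> good F att A \<sigma> g0 d \<longrightarrow> g0 \<in> d!(length d - 2) \<longrightarrow> (\<exists>x\<in>last d. att g0 x) \<longrightarrow> False"
      using claim[OF win noatt] by blast
    then show False using g0L good2 Y X by blast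
  qed
  show ?thesis unfolding conflict_free_def
  proof (intro ballI notI)
    fix x y assume x: "x \<in> A \<union> grounded F att" and y: "y \<in> A \<union> grounded F att" and xy: "att x y"
    show False
    proof (cases "x \<in> A")
      case True
      show False
      proof (cases "y \<in> A")
        case True
        then show False using Acf \<open>x \<in> A\<close> xy unfolding conflict_free_def by blast
      next
        case False
        then have yG: "y \<in> grounded F att" using y by blast
        obtain c where "c \<in> grounded F att" "att c x" using Rt_prop[OF yG xy] by blast
        then show False using NoG \<open>x \<in> A\<close> by blast
      qed
    next
      case False
      then have xG: "x \<in> grounded F att" using x by blast
      show False
      proof (cases "y \<in> A")
        case True
        then show False using NoG xG xy by blast
      next
        case False
        then have yG: "y \<in> grounded F att" using y by blast
        then show False using G_cf[of att F] xG xy unfolding conflict_free_def by blast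
      qed
    qed
  qed
qed

end
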